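(* There is a constant $\alpha'\in(0,\pi/2)$ such that the following holds. Let $P,P'\subset\mathbb R^3$ be two open cuboids and $Q$ the convex hull of $P\cup P'$. If $x_c$ is a vertex of $P$ such that $d(x_c,P')=d_H(P,P')$, then $x_c$ is a vertex of $Q$, and $Q$ is contained in an open spherical cone with vertex $x_c$ and opening angle $2\alpha'$. The constant $\alpha'$ is independent of $P$, $P'$ and their location.
   Context: An open cuboid is the image of $]0,a[\times]0,b[\times]0,c[$ ($a,b,c>0$) under a rigid motion. $d_H(P,P')=\max(\sup_{x\in P}d(x,P'),\sup_{x'\in P'}d(x',P))$ is the Hausdorff distance. An open spherical cone with vertex $x_c$, axis unit vector $v$ and opening angle $2\theta$ is $\{x\ne x_c:(x-x_c)\cdot v>|x-x_c|\cos\theta\}$. *)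

theory Defs
  imports "HOL-Analysis.Analysis"
begin

definition open_cuboid :: "(real^3) set \<Rightarrow> bool" where
  "open_cuboid P \<longleftrightarrow> (\<exists>A t d. rotation_matrix A \<and> (\<forall>i. 0 < d $ i) \<and>
      P = (\<lambda>x. A *v x + t) ` box 0 d)"

definition cuboid_vertex :: "(real^3) set \<Rightarrow> real^3 \<Rightarrow> bool" where
  "cuboid_vertex P v \<longleftrightarrow> (\<exists>A t d c. rotation_matrix A \<and> (\<forall>i. 0 < d $ i) \<and>
      P = (\<lambda>x. A *v x + t) ` box 0 d \<and> (\<forall>i. c $ i = 0 \<or> c $ i = d $ i) \<and>
      v = A *v c + t)"

text \<open>Vertex of a (convex, possibly open) polytope: extreme point of its closure.\<close>
definition polytope_vertex :: "(real^3) set \<Rightarrow> real^3 \<Rightarrow> bool" where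
  "polytope_vertex Q v \<longleftrightarrow> v extreme_point_of (closure Q)"

definition hausdorff_dist :: "(real^3) set \<Rightarrow> (real^3) set \<Rightarrow> real" where
  "hausdorff_dist P P' = max (SUP x\<in>P. infdist x P') (SUP x\<in>P'. infdist x P)"

text \<open>Open spherical cone with vertex xc, unit axis v, opening angle 2 theta.\<close>
definition spherical_cone :: "real^3 \<Rightarrow> real^3 \<Rightarrow> real \<Rightarrow> (real^3) set" where
  "spherical_cone xc v \<theta> = {x. x \<noteq> xc \<and> (x - xc) \<bullet> v > norm (x - xc) * cos \<theta>}"

end

theory Submission
  imports Defs
begin


lemma rot_ot: "rotation_matrix A \<Longrightarrow> orthogonal_transformation (\<lambda>x. A *v (x::real^3))"
  by (simp add: orthogonal_transformation_matrix rotation_matrix_def)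

lemma cuboid_basic:
  assumes "open_cuboid P"
  shows "open P \<and> convex P \<and> bounded P \<and> P \<noteq> {}"
proof -
  have "\<exists>A t d. rotation_matrix A \<and> (\<forall>i. 0 < d $ i) \<and> P = (\<lambda>x. A *v x + t) ` box 0 d"
    using assms unfolding open_cuboid_def .
  then obtain A t d where A: "rotation_matrix A" and d: "\<forall>i. 0 < d $ i"
    and P: "P = (\<lambda>x. A *v x + t) ` box 0 d" by (elim exE conjE)
  have ot: "orthogonal_transformation (\<lambda>x. A *v (x::real^3))" using rot_ot A by blast
  have eq: "P = (\<lambda>x. t + x) ` ((\<lambda>x. A *v x) ` box 0 d)" unfolding P image_image by (simp add: add.commute)
  have ne: "box 0 d \<noteq> {}" using d by (simp add: interval_eq_empty_cart not_le)
  have lin: "linear (\<lambda>x. A *v (x::real^3))" by simp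
  have su: "surj (\<lambda>x. A *v (x::real^3))" using ot by (rule orthogonal_transformation_surj)
  have o1: "open ((\<lambda>x. A *v x) ` box 0 d)" using open_box lin su by (rule open_surjective_linear_image)
  have c1: "convex ((\<lambda>x. A *v x) ` box 0 d)" using lin convex_box(2) by (rule convex_linear_image)
  have b1: "bounded ((\<lambda>x. A *v x) ` box 0 d)" using bounded_box lin
    by (intro bounded_linear_image) (auto simp: linear_conv_bounded_linear)
  have "open P" unfolding eq using o1 by (rule open_translation)
  moreover have "convex P" unfolding eq using c1 by (rule convex_translation)
  moreover have "bounded P" unfolding eq using b1 by (rule bounded_translation)
  moreover have "P \<noteq> {}" unfolding eq using ne by simp
  ultimately show ?thesis by blast
qed


lemma cuboid_vertex_facts:
  assumes "cuboid_vertex P xc"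
  shows "\<exists>u0. norm u0 = 1 \<and> (\<forall>x\<in>closure P. norm (x - xc) / 2 \<le> (x - xc) \<bullet> u0)
     \<and> (\<forall>x\<in>P. x \<noteq> xc) \<and> xc \<in> closure P \<and> open_cuboid P"
proof -
  have "\<exists>A t d c. rotation_matrix A \<and> (\<forall>i. 0 < d $ i) \<and>
      P = (\<lambda>x. A *v x + t) ` box 0 d \<and> (\<forall>i. c $ i = 0 \<or> c $ i = d $ i) \<and>
      xc = A *v c + t" using assms unfolding cuboid_vertex_def .
  then obtain A t d c where A: "rotation_matrix A" and d: "\<forall>i. 0 < d $ i"
    and P: "P = (\<lambda>x. A *v x + t) ` box 0 d" and c: "\<forall>i. c $ i = 0 \<or> c $ i = d $ i"
    and xc: "xc = A *v c + t" by (elim exE conjE)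
  have oc: "open_cuboid P" unfolding open_cuboid_def using A d P by (intro exI conjI)
  have ot: "orthogonal_transformation (\<lambda>x. A *v (x::real^3))" using rot_ot A by blast
  have inn: "(A *v a) \<bullet> (A *v b) = a \<bullet> b" for a b using ot orthogonal_transformation_def by blast
  have nrm: "norm (A *v a) = norm a" for a using ot orthogonal_transformation_norm by blast
  define s :: "real^3" where "s = (\<chi> i. if c $ i = 0 then 1 else -1)"
  have ss: "s \<bullet> s = 3" unfolding s_def by (simp add: inner_vec_def sum_3)
  have ns: "norm s = sqrt 3" using ss by (simp add: norm_eq_sqrt_inner)
  have ns2: "norm s \<le> 2" unfolding ns by (simp add: real_sqrt_le_iff[of 3 4, simplified] real_le_lsqrt)
  have ns0: "norm s > 0" unfolding ns by simp
  define u0 where "u0 = (A *v s) /\<^sub>R norm s"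
  have nu0: "norm u0 = 1" unfolding u0_def using nrm ns0 by simp
  have key: "norm (z - c) \<le> (z - c) \<bullet> s \<and> z \<noteq> c" if z: "z \<in> box 0 d" for z
  proof -
    have zi: "0 < z $ i \<and> z $ i < d $ i" for i using z by (simp add: mem_box_cart)
    have trm: "(z - c) $ i * s $ i = \<bar>(z - c) $ i\<bar>" for i
      using zi[of i] c[rule_format, of i] unfolding s_def by auto
    have "(z - c) \<bullet> s = (\<Sum>i\<in>UNIV. \<bar>(z - c) $ i\<bar>)" unfolding inner_vec_def using trm by simp
    moreover have "z \<noteq> c" using zi[of 1] c[rule_format, of 1] by auto
    ultimately show ?thesis using norm_le_l1_cart[of "z - c"] by simp
  qed
  have Pk: "P \<subseteq> {x. norm (x - xc) / 2 \<le> (x - xc) \<bullet> u0}"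
  proof
    fix x assume "x \<in> P"
    then obtain z where z: "z \<in> box 0 d" and x: "x = A *v z + t" using P by auto
    have xd: "x - xc = A *v (z - c)" using x xc by (simp add: matrix_vector_mult_diff_distrib)
    have "(x - xc) \<bullet> u0 = ((z - c) \<bullet> s) / norm s" unfolding xd u0_def using inn by (simp add: divide_inverse_commute)
    also have "\<dots> \<ge> norm (z - c) / norm s" using key[OF z] ns0 by (simp add: divide_right_mono)
    finally have "(x - xc) \<bullet> u0 \<ge> norm (z - c) / norm s" .
    moreover have "norm (z - c) / 2 \<le> norm (z - c) / norm s" using ns2 ns0
      by (intro divide_left_mono) auto
    ultimately have "norm (z - c) / 2 \<le> (x - xc) \<bullet> u0" by linarith
    then show "x \<in> {x. norm (x - xc) / 2 \<le> (x - xc) \<bullet> u0}" using xd nrm[of "z - c"] by simp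
  qed
  have clk: "closed {x. norm (x - xc) / 2 \<le> (x - xc) \<bullet> u0}"
    by (intro closed_Collect_le continuous_intros) auto
  have cl: "\<forall>x\<in>closure P. norm (x - xc) / 2 \<le> (x - xc) \<bullet> u0"
    using closure_minimal[OF Pk clk] by blast
  have nP: "\<forall>x\<in>P. x \<noteq> xc"
  proof
    fix x assume "x \<in> P"
    then obtain z where z: "z \<in> box 0 d" and x: "x = A *v z + t" using P by auto
    have xd: "x - xc = A *v (z - c)" using x xc by (simp add: matrix_vector_mult_diff_distrib)
    show "x \<noteq> xc" using key[OF z] nrm[of "z - c"] xd by auto
  qed
  have ne: "box 0 d \<noteq> {}" using d by (simp add: interval_eq_empty_cart not_le)
  have "(\<lambda>x. A *v x + t) ` closure (box 0 d) \<subseteq> closure P"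
    by (rule image_closure_subset) (auto simp: P intro!: continuous_intros closure_subset[THEN subsetD])
  moreover have "c \<in> closure (box 0 d)"
  proof -
    have "c \<in> cbox 0 d" unfolding mem_box_cart
    proof
      fix i show "0 $ i \<le> c $ i \<and> c $ i \<le> d $ i" using c[rule_format, of i] d[rule_format, of i] by auto
    qed
    then show ?thesis using closure_box[OF ne] by simp
  qed
  ultimately have "xc \<in> closure P" using xc by blast
  with nu0 cl nP oc show ?thesis by blast
qed


lemma cone_key:
  fixes xc u0 w :: "real^3"
  assumes nu0: "norm u0 = 1" and u0P: "\<forall>x\<in>closure P. norm (x - xc) / 2 \<le> (x - xc) \<bullet> u0"
    and nw: "norm w = 1" and wP: "\<forall>x\<in>P. 0 \<le> (x - xc) \<bullet> w"
    and wP': "\<forall>y\<in>P'. d \<le> (y - xc) \<bullet> w"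
    and near: "\<forall>y\<in>P'. \<exists>x\<in>closure P. dist y x \<le> d"
  shows "\<exists>v. norm v = 1 \<and> (\<forall>x\<in>P \<union> P'. norm (x - xc) / 6 \<le> (x - xc) \<bullet> v)"
proof -
  define g where "g = 2 *\<^sub>R w + u0"
  have N3: "norm g \<le> 3" unfolding g_def using norm_triangle_ineq[of "2 *\<^sub>R w" u0] nw nu0 by simp
  have N1: "norm g \<ge> 1" unfolding g_def using norm_triangle_ineq2[of "2 *\<^sub>R w" "- u0"] nw nu0 by simp
  define v where "v = g /\<^sub>R norm g"
  have nv: "norm v = 1" unfolding v_def using N1 by (cases "g = 0") auto
  have gen: "norm X / 6 \<le> X \<bullet> v" if h: "norm X / 2 \<le> X \<bullet> g" for X :: "real^3"
  proof -
    have "X \<bullet> v = (X \<bullet> g) / norm g" unfolding v_def by (simp add: divide_inverse_commute)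
    moreover have "(X \<bullet> g) / norm g \<ge> (norm X / 2) / norm g" using h N1 by (intro divide_right_mono) auto
    moreover have "(norm X / 2) / norm g \<ge> (norm X / 2) / 3" using N1 N3 by (intro divide_left_mono) auto
    ultimately show ?thesis by linarith
  qed
  have "\<forall>x\<in>P \<union> P'. norm (x - xc) / 6 \<le> (x - xc) \<bullet> v"
  proof
    fix x assume "x \<in> P \<union> P'"
    then show "norm (x - xc) / 6 \<le> (x - xc) \<bullet> v"
    proof
      assume xP: "x \<in> P"
      have "norm (x - xc) / 2 \<le> (x - xc) \<bullet> u0" using u0P xP closure_subset by blast
      moreover have "0 \<le> (x - xc) \<bullet> w" using wP xP by blast
      ultimately show ?thesis by (intro gen) (simp add: g_def inner_add_right)
    next
      assume yP: "x \<in> P'"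
      obtain z where z: "z \<in> closure P" "dist x z \<le> d" using near yP by blast
      have a: "norm (z - xc) / 2 \<le> (z - xc) \<bullet> u0" using u0P z by blast
      have b: "d \<le> (x - xc) \<bullet> w" using wP' yP by blast
      have c: "(x - z) \<bullet> u0 \<ge> - norm (x - z)"
      proof -
        have "(z - x) \<bullet> u0 \<le> norm (z - x)" using norm_cauchy_schwarz[of "z - x" u0] nu0 by simp
        moreover have "(z - x) \<bullet> u0 = - ((x - z) \<bullet> u0)" by (simp add: inner_diff_left)
        moreover have "norm (z - x) = norm (x - z)" by (rule norm_minus_commute)
        ultimately show ?thesis by linarith
      qed
      have e: "norm (x - z) \<le> d" using z by (simp add: dist_norm)
      have f: "norm (x - xc) \<le> norm (z - xc) + norm (x - z)"
        using norm_triangle_ineq[of "z - xc" "x - z"] by simp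
      have "(x - xc) \<bullet> u0 = (z - xc) \<bullet> u0 + (x - z) \<bullet> u0" by (simp add: inner_diff_left)
      then have "norm (x - xc) / 2 \<le> (x - xc) \<bullet> g" using a b c e f norm_ge_zero[of "x - z"]
        unfolding g_def inner_add_right inner_scaleR_right by linarith
      then show ?thesis by (rule gen)
    qed
  qed
  with nv show ?thesis by blast
qed

lemma cone_convex:
  assumes "0 \<le> cos a"
  shows "convex (spherical_cone xc v a)"
  unfolding convex_alt
proof (intro ballI allI impI)
  fix x y u assume x: "x \<in> spherical_cone xc v a" and y: "y \<in> spherical_cone xc v a"
    and u: "0 \<le> (u::real) \<and> u \<le> 1"
  let ?c = "cos a"
  have hx: "(x - xc) \<bullet> v > norm (x - xc) * ?c" using x spherical_cone_def by auto
  have hy: "(y - xc) \<bullet> v > norm (y - xc) * ?c" using y spherical_cone_def by auto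
  have eq: "(1 - u) *\<^sub>R x + u *\<^sub>R y - xc = (1 - u) *\<^sub>R (x - xc) + u *\<^sub>R (y - xc)"
    by (simp add: algebra_simps)
  have ineq: "norm ((1 - u) *\<^sub>R (x - xc) + u *\<^sub>R (y - xc)) * ?c
      \<le> ((1 - u) * norm (x - xc) + u * norm (y - xc)) * ?c"
    using norm_triangle_ineq[of "(1 - u) *\<^sub>R (x - xc)" "u *\<^sub>R (y - xc)"] u assms
    by (intro mult_right_mono) auto
  have s: "(1 - u) * ((x - xc) \<bullet> v) + u * ((y - xc) \<bullet> v)
      > (1 - u) * (norm (x - xc) * ?c) + u * (norm (y - xc) * ?c)"
  proof (cases "u = 0")
    case True then show ?thesis using hx by simp
  next
    case False
    then have "u > 0" using u by simp
    then have "u * ((y - xc) \<bullet> v) > u * (norm (y - xc) * ?c)" using hy by simp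
    moreover have "(1 - u) * ((x - xc) \<bullet> v) \<ge> (1 - u) * (norm (x - xc) * ?c)"
      using hx u by (intro mult_left_mono) auto
    ultimately show ?thesis by linarith
  qed
  have main: "((1 - u) *\<^sub>R x + u *\<^sub>R y - xc) \<bullet> v > norm ((1 - u) *\<^sub>R x + u *\<^sub>R y - xc) * ?c"
    unfolding eq using ineq s by (simp add: inner_add_left algebra_simps)
  then have "(1 - u) *\<^sub>R x + u *\<^sub>R y \<noteq> xc" by auto
  with main show "(1 - u) *\<^sub>R x + u *\<^sub>R y \<in> spherical_cone xc v a" by (simp add: spherical_cone_def)
qed

lemma cone_extreme:
  fixes xc v :: "real^3"
  assumes c: "0 < c" and K: "\<forall>x\<in>S. c * norm (x - xc) \<le> (x - xc) \<bullet> v" and xc: "xc \<in> S"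
  shows "xc extreme_point_of S"
  unfolding extreme_point_of_def
proof (intro conjI ballI xc)
  fix a b assume a: "a \<in> S" and b: "b \<in> S"
  show "xc \<notin> open_segment a b"
  proof
    assume "xc \<in> open_segment a b"
    then obtain u where ab: "a \<noteq> b" and u: "0 < u" "u < 1" and x: "xc = (1 - u) *\<^sub>R a + u *\<^sub>R b"
      by (auto simp: in_segment)
    have z: "(1 - u) *\<^sub>R (a - xc) + u *\<^sub>R (b - xc) = 0" using x by (simp add: algebra_simps)
    have "(1 - u) * ((a - xc) \<bullet> v) + u * ((b - xc) \<bullet> v) = 0"
      using arg_cong[OF z, of "\<lambda>z. z \<bullet> v"] by (simp add: inner_add_left)
    then have E: "(1 - u) * ((a - xc) \<bullet> v) + u * ((b - xc) \<bullet> v) = 0" .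
    have ha: "c * norm (a - xc) \<le> (a - xc) \<bullet> v" using K a by blast
    have hb: "c * norm (b - xc) \<le> (b - xc) \<bullet> v" using K b by blast
    have pa: "0 \<le> (a - xc) \<bullet> v" using ha c norm_ge_zero[of "a - xc"] mult_nonneg_nonneg[of c "norm (a - xc)"] by linarith
    have pb: "0 \<le> (b - xc) \<bullet> v" using hb c norm_ge_zero[of "b - xc"] mult_nonneg_nonneg[of c "norm (b - xc)"] by linarith
    have qa: "0 \<le> (1 - u) * ((a - xc) \<bullet> v)" using pa u by simp
    have qb: "0 \<le> u * ((b - xc) \<bullet> v)" using pb u by simp
    have "(1 - u) * ((a - xc) \<bullet> v) = 0" "u * ((b - xc) \<bullet> v) = 0" using E qa qb by linarith+
    then have "(a - xc) \<bullet> v = 0" "(b - xc) \<bullet> v = 0" using u by auto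
    then have "c * norm (a - xc) \<le> 0" "c * norm (b - xc) \<le> 0" using ha hb by auto
    then have "norm (a - xc) = 0 \<and> norm (b - xc) = 0" using c by (auto simp: mult_le_0_iff)
    then show False using ab by simp
  qed
qed


lemma bdd_infdist:
  fixes A B :: "(real^3) set"
  assumes "bounded B" "A \<noteq> {}"
  shows "bdd_above ((\<lambda>x. infdist x A) ` B)"
proof -
  obtain a where a: "a \<in> A" using assms by blast
  obtain x0 r where r: "B \<subseteq> cball x0 r" using assms bounded_subset_cball by blast
  show ?thesis
  proof (rule bdd_aboveI2)
    fix x assume "x \<in> B"
    then have "dist x0 x \<le> r" using r by auto
    moreover have "infdist x A \<le> dist x a" using a by (rule infdist_le)
    moreover have "dist x a \<le> dist x x0 + dist x0 a" by (rule dist_triangle)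
    ultimately show "infdist x A \<le> r + dist x0 a" by (simp add: dist_commute)
  qed
qed

theorem mainTheorem19:
  shows "\<exists>\<alpha>'. 0 < \<alpha>' \<and> \<alpha>' < pi / 2 \<and>
    (\<forall>P P' xc. open_cuboid P \<longrightarrow> open_cuboid P' \<longrightarrow> cuboid_vertex P xc \<longrightarrow>
       infdist xc P' = hausdorff_dist P P' \<longrightarrow>
       polytope_vertex (convex hull (P \<union> P')) xc \<and>
       (\<exists>v. norm v = 1 \<and> convex hull (P \<union> P') \<subseteq> spherical_cone xc v \<alpha>'))"
proof -
  define \<alpha> where "\<alpha> = arccos (1/7)"
  have ca: "cos \<alpha> = 1/7" unfolding \<alpha>_def by (simp add: cos_arccos)
  have a0: "0 < \<alpha>" unfolding \<alpha>_def using arccos_less_arccos[of "1/7" 1] by simp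
  have a1: "\<alpha> < pi / 2" unfolding \<alpha>_def using arccos_less_arccos[of 0 "1/7"] by simp
  have "\<forall>P P' xc. open_cuboid P \<longrightarrow> open_cuboid P' \<longrightarrow> cuboid_vertex P xc \<longrightarrow>
       infdist xc P' = hausdorff_dist P P' \<longrightarrow>
       polytope_vertex (convex hull (P \<union> P')) xc \<and>
       (\<exists>v. norm v = 1 \<and> convex hull (P \<union> P') \<subseteq> spherical_cone xc v \<alpha>)"
  proof (intro allI impI)
    fix P P' :: "(real^3) set" and xc :: "real^3"
    assume oP: "open_cuboid P" and oP': "open_cuboid P'" and cv: "cuboid_vertex P xc"
      and hd: "infdist xc P' = hausdorff_dist P P'"
    obtain u0 where nu0: "norm u0 = 1" and u0P: "\<forall>x\<in>closure P. norm (x - xc) / 2 \<le> (x - xc) \<bullet> u0"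
      and nP: "\<forall>x\<in>P. x \<noteq> xc" and xcP: "xc \<in> closure P"
      using cuboid_vertex_facts[OF cv] by blast
    have bP: "open P \<and> convex P \<and> bounded P \<and> P \<noteq> {}" using cuboid_basic[OF oP] .
    have bP': "open P' \<and> convex P' \<and> bounded P' \<and> P' \<noteq> {}" using cuboid_basic[OF oP'] .
    define d where "d = hausdorff_dist P P'"
    have hd': "infdist xc P' = d" using hd d_def by simp
    have d0: "0 \<le> d" using hd' infdist_nonneg by metis
    have H1: "infdist x P' \<le> d" if "x \<in> P" for x
    proof -
      have "infdist x P' \<le> (SUP x\<in>P. infdist x P')"
        using that bdd_infdist[of P P'] bP bP' by (intro cSUP_upper) auto
      then show ?thesis unfolding d_def hausdorff_dist_def by linarith
    qed
    have H2: "infdist y P \<le> d" if "y \<in> P'" for y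
    proof -
      have "infdist y P \<le> (SUP x\<in>P'. infdist x P)"
        using that bdd_infdist[of P' P] bP bP' by (intro cSUP_upper) auto
      then show ?thesis unfolding d_def hausdorff_dist_def by linarith
    qed
    have clPne: "closure P \<noteq> {}" using bP by simp
    have near: "\<forall>y\<in>P'. \<exists>x\<in>closure P. dist y x \<le> d"
    proof
      fix y assume y: "y \<in> P'"
      obtain x where x: "x \<in> closure P" "infdist y (closure P) = dist y x"
        using infdist_attains_inf[OF closed_closure clPne] by blast
      have "infdist y (closure P) \<le> infdist y P" using bP by (intro infdist_mono closure_subset) auto
      then have "dist y x \<le> d" using x H2[OF y] by linarith
      with x(1) show "\<exists>x\<in>closure P. dist y x \<le> d" by blast
    qed
    obtain w where nw: "norm w = 1" and wP: "\<forall>x\<in>P. 0 \<le> (x - xc) \<bullet> w"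
      and wP': "\<forall>y\<in>P'. d \<le> (y - xc) \<bullet> w" and ne: "\<forall>y\<in>P'. y \<noteq> xc"
    proof (cases "d = 0")
      case True
      have inP: "y \<in> closure P" if "y \<in> P'" for y
      proof -
        have "infdist y P = 0" using H2[OF that] True infdist_nonneg[of y P] by linarith
        then show ?thesis using in_closure_iff_infdist_zero bP by blast
      qed
      have pos: "0 \<le> (x - xc) \<bullet> u0" if "x \<in> closure P" for x
        using u0P[rule_format, OF that] norm_ge_zero[of "x - xc"] by linarith
      have ne: "y \<noteq> xc" if y: "y \<in> P'" for y
      proof
        assume "y = xc"
        then have "xc \<in> P'" using y by simp
        then obtain e where e: "e > 0" "ball xc e \<subseteq> P'" using bP' open_contains_ball by blast
        define z where "z = xc - (e/2) *\<^sub>R u0"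
        have "dist xc z = e/2" unfolding z_def using nu0 e by (simp add: dist_norm)
        then have "z \<in> P'" using e by auto
        then have "0 \<le> (z - xc) \<bullet> u0" using pos inP by blast
        moreover have "(z - xc) \<bullet> u0 = - (e/2)" unfolding z_def using nu0
          by (simp add: inner_diff_left) (simp add: norm_eq_sqrt_inner)
        ultimately show False using e by linarith
      qed
      show ?thesis
        by (rule that[of u0]) (use nu0 pos inP closure_subset ne True in auto)
    next
      case False
      then have dpos: "d > 0" using d0 by simp
      have cne: "closure P' \<noteq> {}" using bP' by simp
      obtain p where p: "p \<in> closure P'" "infdist xc (closure P') = dist xc p"
        using infdist_attains_inf[OF closed_closure cne] by blast
      have "infdist p P' = 0" using p bP' in_closure_iff_infdist_zero by blast
      then have dD: "d \<le> dist xc p" using infdist_triangle[of xc P' p] hd' by simp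
      define D where "D = norm (p - xc)"
      have D: "D = dist xc p" unfolding D_def by (simp add: dist_norm norm_minus_commute)
      have Dpos: "D > 0" using dD dpos D by linarith
      have closest: "\<forall>z\<in>closure P'. dist xc p \<le> dist xc z"
        using p infdist_le by metis
      have big: "D \<le> (y - xc) \<bullet> ((1 / D) *\<^sub>R (p - xc))" if y: "y \<in> closure P'" for y
      proof -
        have "inner (xc - p) (y - p) \<le> 0"
          using any_closest_point_dot[OF convex_closure[of P'] closed_closure p(1) y closest] bP'
          by simp
        then have "0 \<le> (y - p) \<bullet> (p - xc)"
          by (metis inner_commute inner_minus_left minus_diff_eq neg_0_le_iff_le)
        moreover have "(y - xc) \<bullet> (p - xc) = (y - p) \<bullet> (p - xc) + D * D"
        proof -
          have "(y - xc) \<bullet> (p - xc) = ((y - p) + (p - xc)) \<bullet> (p - xc)" by simp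
          also have "\<dots> = (y - p) \<bullet> (p - xc) + (p - xc) \<bullet> (p - xc)" by (rule inner_add_left)
          also have "(p - xc) \<bullet> (p - xc) = D * D" unfolding D_def by (simp add: dot_square_norm power2_eq_square)
          finally show ?thesis .
        qed
        ultimately have "D * D \<le> (y - xc) \<bullet> (p - xc)" by linarith
        then have "D \<le> ((y - xc) \<bullet> (p - xc)) / D" using Dpos by (simp add: pos_le_divide_eq)
        moreover have "(y - xc) \<bullet> ((1 / D) *\<^sub>R (p - xc)) = ((y - xc) \<bullet> (p - xc)) / D"
          by (simp only: inner_scaleR_right) simp
        ultimately show ?thesis by simp
      qed
      define w where "w = (1 / D) *\<^sub>R (p - xc)"
      have nw: "norm w = 1" unfolding w_def D_def using Dpos D_def by simp
      have wP': "\<forall>y\<in>closure P'. d \<le> (y - xc) \<bullet> w"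
        using big dD D unfolding w_def by (metis order_trans)
      have wP: "0 \<le> (x - xc) \<bullet> w" if x: "x \<in> P" for x
      proof -
        obtain q where q: "q \<in> closure P'" "infdist x (closure P') = dist x q"
          using infdist_attains_inf[OF closed_closure cne] by blast
        have "infdist x (closure P') \<le> infdist x P'" using bP' by (intro infdist_mono closure_subset) auto
        then have qd: "norm (q - x) \<le> d" using q H1[OF x] by (simp add: dist_norm norm_minus_commute)
        have "(q - x) \<bullet> w \<le> norm (q - x)" using norm_cauchy_schwarz[of "q - x" w] nw by simp
        moreover have "(x - xc) \<bullet> w = (q - xc) \<bullet> w - (q - x) \<bullet> w" by (simp add: inner_diff_left)
        moreover have "d \<le> (q - xc) \<bullet> w" using wP' q by blast
        ultimately show ?thesis using qd by linarith
      qed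
      show ?thesis
      proof (rule that[of w])
        show "norm w = 1" by (rule nw)
        show "\<forall>x\<in>P. 0 \<le> (x - xc) \<bullet> w" using wP by blast
        show "\<forall>y\<in>P'. d \<le> (y - xc) \<bullet> w" using wP' closure_subset by blast
        show "\<forall>y\<in>P'. y \<noteq> xc"
        proof (intro ballI notI)
          fix y assume "y \<in> P'" "y = xc"
          then have "d \<le> (y - xc) \<bullet> w" using wP' closure_subset by blast
          with \<open>y = xc\<close> dpos show False by simp
        qed
      qed
    qed
    obtain v where nv: "norm v = 1" and vP: "\<forall>x\<in>P \<union> P'. norm (x - xc) / 6 \<le> (x - xc) \<bullet> v"
      using cone_key[OF nu0 u0P nw wP wP' near] by blast
    have sub: "P \<union> P' \<subseteq> spherical_cone xc v \<alpha>"
    proof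
      fix x assume x: "x \<in> P \<union> P'"
      then have "x \<noteq> xc" using nP ne by blast
      then have "norm (x - xc) > 0" by simp
      then have "norm (x - xc) * (1/7) < norm (x - xc) / 6" by simp
      moreover have "norm (x - xc) / 6 \<le> (x - xc) \<bullet> v" using vP x by blast
      ultimately have "norm (x - xc) * cos \<alpha> < (x - xc) \<bullet> v" unfolding ca by linarith
      then show "x \<in> spherical_cone xc v \<alpha>" using \<open>x \<noteq> xc\<close>
        unfolding spherical_cone_def by blast
    qed
    have hull: "convex hull (P \<union> P') \<subseteq> spherical_cone xc v \<alpha>"
      using sub cone_convex ca by (intro hull_minimal) auto
    define K where "K = {x. (1/7) * norm (x - xc) \<le> (x - xc) \<bullet> v}"
    have Kc: "closed K" unfolding K_def by (intro closed_Collect_le continuous_intros) auto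
    have coneK: "spherical_cone xc v \<alpha> \<subseteq> K" unfolding K_def spherical_cone_def ca by auto
    have "closure (convex hull (P \<union> P')) \<subseteq> K"
      using hull coneK Kc by (meson closure_minimal order_trans)
    moreover have "xc \<in> closure (convex hull (P \<union> P'))"
    proof -
      have "P \<subseteq> convex hull (P \<union> P')" using hull_subset[of "P \<union> P'" convex] by blast
      then have "closure P \<subseteq> closure (convex hull (P \<union> P'))" by (rule closure_mono)
      then show ?thesis using xcP by blast
    qed
    ultimately have "xc extreme_point_of closure (convex hull (P \<union> P'))"
      by (intro cone_extreme[where c = "1/7" and v = v]) (auto simp: K_def)
    then show "polytope_vertex (convex hull (P \<union> P')) xc \<and>
       (\<exists>v. norm v = 1 \<and> convex hull (P \<union> P') \<subseteq> spherical_cone xc v \<alpha>)"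
      unfolding polytope_vertex_def using nv hull by blast
  qed
  then show ?thesis using a0 a1 by blast
qed

end
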